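(* Let $a^*=(a^*_1,\dots,a^*_n)\in A$ be an aggregate strong Nash equilibrium of the $n$-player objective game $G$. Then $a^*$ is stable under perfect observability, i.e. there exist $\mu\in\mathcal M(\Theta^n)$ and a stable configuration $(\mu,b)$ whose aggregate outcome is the point mass at $a^*$.
   Context: Objective game: $G=(N,A,\pi)$ is a finite $n$-player normal-form game, $N=\{1,\dots,n\}$, finite action sets $A_i$, $A=\prod_{i\in N}A_i$, material payoff (fitness) functions $\pi_i:A\to\mathbb{R}$, extended multilinearly to mixed profiles in $\prod_{i}\Delta(A_i)$; $\pi=(\pi_1,\dots,\pi_n)$. A strategy profile $x\in\prod_i\Delta(A_i)$ is an aggregate strong Nash equilibrium if for every $J\subseteq N$ and every $\sigma_J\in\prod_{j\in J}\Delta(A_j)$ with $\sigma_j\neq x_j$ for some $j\in J$, $\sum_{j\in J}\pi_j(x)>\sum_{j\in J}\pi_j(\sigma_J,x_{-J})$. Preference types: $\Theta=\mathbb{R}^A$ (utility functions on $A$, extended multilinearly to mixed profiles). $\mathcal{M}(\Theta^n)$ is the set of product distributions $\mu=\mu_1\times\dots\times\mu_n$ on $\Theta^n$ with each $\mu_i$ finitely supported; $\operatorname{supp}\mu=\prod_i\operatorname{supp}\mu_i$, $\mu(\theta)=\prod_i\mu_i(\theta_i)$, $\mu_{-i}(\theta_{-i})=\prod_{j\neq i}\mu_j(\theta_j)$. Mutants: for nonempty $J\subseteq N$, a mutant sub-profile is $\tilde\theta_J\in\prod_{j\in J}(\Theta\setminus\operatorname{supp}\mu_j)$ with shares $\varepsilon=(\varepsilon_j)_{j\in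 J}\in(0,1)^{|J|}$, $\|\varepsilon\|=\max_j\varepsilon_j$; the post-entry distribution $\tilde\mu^\varepsilon$ has $\tilde\mu^\varepsilon_i=(1-\varepsilon_i)\mu_i+\varepsilon_i\delta_{\tilde\theta_i}$ for $i\in J$ and $\tilde\mu^\varepsilon_i=\mu_i$ otherwise. Perfect observability: for $\mu\in\mathcal M(\Theta^n)$, an equilibrium is a map $b:\operatorname{supp}\mu\to\prod_i\Delta(A_i)$ such that for each $\theta$, $b(\theta)$ is a Nash equilibrium of the normal-form game with action sets $A_i$ and payoffs $\theta_1,\dots,\theta_n$; $B_1(\mu)$ is the set of these; $(\mu,b)$ with $b\in B_1(\mu)$ is a configuration, with aggregate outcome $\varphi_{\mu,b}(a)=\sum_{\theta\in\operatorname{supp}\mu}\mu(\theta)\prod_{i}b_i(\theta)(a_i)$. Average fitness of $\theta_i\in\operatorname{supp}\mu_i$: $\Pi_{\theta_i}(\mu;b)=\sum_{\theta'_{-i}\in\operatorname{supp}\mu_{-i}}\mu_{-i}(\theta'_{-i})\pi_i(b(\theta_i,\theta'_{-i}))$. $(\mu,b)$ is balanced if for each $i$ all types in $\operatorname{supp}\mu_i$ have equal average fitness. Focal set: $B_1(\tilde\mu^\varepsilon;b)=\{\tilde b\in B_1(\tilde\mu^\varepsilon):\tilde b(\theta)=b(\theta)\ \forall\theta\in\operatorname{supp}\mu\}$. $(\mu,b)$ is stable if it is balanced and for every nonempty $J\subseteq N$ and every mutant sub-profile $\tilde\theta_J$ there is $\bar\epsilon\in(0,1)$ such that for every $\varepsilon\in(0,1)^{|J|}$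 with $\|\varepsilon\|<\bar\epsilon$ and every $\tilde b\in B_1(\tilde\mu^\varepsilon;b)$, either (i) there is $j\in J$ with $\Pi_{\theta_j}(\tilde\mu^\varepsilon;\tilde b)>\Pi_{\tilde\theta_j}(\tilde\mu^\varepsilon;\tilde b)$ for all $\theta_j\in\operatorname{supp}\mu_j$, or (ii) for every $i\in N$ all types in $\operatorname{supp}\tilde\mu^\varepsilon_i$ have equal average fitness under $(\tilde\mu^\varepsilon,\tilde b)$. *)

theory Defs
  imports Complex_Main "HOL-Library.FuncSet"
begin

text \<open>Players are the elements of a finite type 'i (the player set N is UNIV).
  A preference type is a utility function on pure profiles, normalised to 0
  outside A (so that types are exactly elements of R^A).\<close>

type_synonym ('i, 'a) ptype = "('i \<Rightarrow> 'a) \<Rightarrow> real"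

definition profiles :: "('i \<Rightarrow> 'a set) \<Rightarrow> ('i \<Rightarrow> 'a) set" where
  "profiles Act = Pi\<^sub>E UNIV Act"

definition Types :: "('i \<Rightarrow> 'a set) \<Rightarrow> ('i, 'a) ptype set" where
  "Types Act = {u. \<forall>a. a \<notin> profiles Act \<longrightarrow> u a = 0}"

definition mixed :: "('i \<Rightarrow> 'a set) \<Rightarrow> 'i \<Rightarrow> ('a \<Rightarrow> real) \<Rightarrow> bool" where
  "mixed Act i s \<longleftrightarrow> (\<forall>x. 0 \<le> s x) \<and> (\<forall>x. x \<notin> Act i \<longrightarrow> s x = 0) \<and> sum s (Act i) = 1"

definition mixed_profile :: "('i \<Rightarrow> 'a set) \<Rightarrow> ('i \<Rightarrow> 'a \<Rightarrow> real) \<Rightarrow> bool" where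
  "mixed_profile Act x \<longleftrightarrow> (\<forall>i. mixed Act i (x i))"

definition EU :: "('i::finite \<Rightarrow> 'a set) \<Rightarrow> (('i \<Rightarrow> 'a) \<Rightarrow> real) \<Rightarrow> ('i \<Rightarrow> 'a \<Rightarrow> real) \<Rightarrow> real" where
  "EU Act u x = (\<Sum>a\<in>profiles Act. (\<Prod>i\<in>UNIV. x i (a i)) * u a)"

definition pure :: "('i \<Rightarrow> 'a) \<Rightarrow> ('i \<Rightarrow> 'a \<Rightarrow> real)" where
  "pure a = (\<lambda>i y. if y = a i then 1 else 0)"

definition aggregate_strong_NE ::
  "('i::finite \<Rightarrow> 'a set) \<Rightarrow> ('i \<Rightarrow> ('i \<Rightarrow> 'a) \<Rightarrow> real) \<Rightarrow> ('i \<Rightarrow> 'a \<Rightarrow> real) \<Rightarrow> bool" where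
  "aggregate_strong_NE Act \<pi> x \<longleftrightarrow> mixed_profile Act x \<and>
     (\<forall>J \<sigma>. (\<forall>j\<in>J. mixed Act j (\<sigma> j)) \<and> (\<exists>j\<in>J. \<sigma> j \<noteq> x j) \<longrightarrow>
        (\<Sum>j\<in>J. EU Act (\<pi> j) x) > (\<Sum>j\<in>J. EU Act (\<pi> j) (\<lambda>i. if i \<in> J then \<sigma> i else x i)))"

definition is_NE :: "('i::finite \<Rightarrow> 'a set) \<Rightarrow> ('i \<Rightarrow> ('i \<Rightarrow> 'a) \<Rightarrow> real) \<Rightarrow> ('i \<Rightarrow> 'a \<Rightarrow> real) \<Rightarrow> bool" where
  "is_NE Act u x \<longleftrightarrow> mixed_profile Act x \<and>
     (\<forall>i s. mixed Act i s \<longrightarrow> EU Act (u i) (x(i := s)) \<le> EU Act (u i) x)"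

definition supp :: "('b \<Rightarrow> real) \<Rightarrow> 'b set" where
  "supp w = {t. w t \<noteq> 0}"

definition type_dist :: "('i \<Rightarrow> 'a set) \<Rightarrow> (('i, 'a) ptype \<Rightarrow> real) \<Rightarrow> bool" where
  "type_dist Act w \<longleftrightarrow> (\<forall>t. 0 \<le> w t) \<and> finite (supp w) \<and> supp w \<subseteq> Types Act \<and> sum w (supp w) = 1"

text \<open>Element of M(Theta^n): a product distribution, given by its marginals.\<close>
definition pop_dist :: "('i \<Rightarrow> 'a set) \<Rightarrow> ('i \<Rightarrow> ('i, 'a) ptype \<Rightarrow> real) \<Rightarrow> bool" where
  "pop_dist Act \<mu> \<longleftrightarrow> (\<forall>i. type_dist Act (\<mu> i))"

definition suppP :: "('i \<Rightarrow> ('i, 'a) ptype \<Rightarrow> real) \<Rightarrow> ('i \<Rightarrow> ('i, 'a) ptype) set" where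
  "suppP \<mu> = Pi\<^sub>E UNIV (\<lambda>i. supp (\<mu> i))"

definition B1 :: "('i::finite \<Rightarrow> 'a set) \<Rightarrow> ('i \<Rightarrow> ('i, 'a) ptype \<Rightarrow> real)
    \<Rightarrow> (('i \<Rightarrow> ('i, 'a) ptype) \<Rightarrow> 'i \<Rightarrow> 'a \<Rightarrow> real) \<Rightarrow> bool" where
  "B1 Act \<mu> b \<longleftrightarrow> (\<forall>\<theta>\<in>suppP \<mu>. is_NE Act \<theta> (b \<theta>))"

definition configuration where
  "configuration Act \<mu> b \<longleftrightarrow> pop_dist Act \<mu> \<and> B1 Act \<mu> b"

definition outcome :: "('i::finite \<Rightarrow> ('i, 'a) ptype \<Rightarrow> real)
    \<Rightarrow> (('i \<Rightarrow> ('i, 'a) ptype) \<Rightarrow> 'i \<Rightarrow> 'a \<Rightarrow> real) \<Rightarrow> ('i \<Rightarrow> 'a) \<Rightarrow> real" where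
  "outcome \<mu> b a = (\<Sum>\<theta>\<in>suppP \<mu>. (\<Prod>i\<in>UNIV. \<mu> i (\<theta> i)) * (\<Prod>i\<in>UNIV. b \<theta> i (a i)))"

definition fitness :: "('i::finite \<Rightarrow> 'a set) \<Rightarrow> ('i \<Rightarrow> ('i \<Rightarrow> 'a) \<Rightarrow> real)
    \<Rightarrow> ('i \<Rightarrow> ('i, 'a) ptype \<Rightarrow> real) \<Rightarrow> (('i \<Rightarrow> ('i, 'a) ptype) \<Rightarrow> 'i \<Rightarrow> 'a \<Rightarrow> real)
    \<Rightarrow> 'i \<Rightarrow> ('i, 'a) ptype \<Rightarrow> real" where
  "fitness Act \<pi> \<mu> b i t =
     (\<Sum>\<theta>\<in>Pi\<^sub>E UNIV (\<lambda>j. if j = i then {t} else supp (\<mu> j)).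
        (\<Prod>j\<in>UNIV - {i}. \<mu> j (\<theta> j)) * EU Act (\<pi> i) (b \<theta>))"

definition balanced where
  "balanced Act \<pi> \<mu> b \<longleftrightarrow>
     (\<forall>i. \<forall>t\<in>supp (\<mu> i). \<forall>t'\<in>supp (\<mu> i). fitness Act \<pi> \<mu> b i t = fitness Act \<pi> \<mu> b i t')"

definition post_entry :: "('i \<Rightarrow> ('i, 'a) ptype \<Rightarrow> real) \<Rightarrow> 'i set \<Rightarrow> ('i \<Rightarrow> ('i, 'a) ptype)
    \<Rightarrow> ('i \<Rightarrow> real) \<Rightarrow> ('i \<Rightarrow> ('i, 'a) ptype \<Rightarrow> real)" where
  "post_entry \<mu> J tm eps = (\<lambda>i t. if i \<in> J
      then (1 - eps i) * \<mu> i t + eps i * (if t = tm i then 1 else 0) else \<mu> i t)"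

definition stable where
  "stable Act \<pi> \<mu> b \<longleftrightarrow> balanced Act \<pi> \<mu> b \<and>
    (\<forall>J tm. J \<noteq> {} \<and> (\<forall>j\<in>J. tm j \<in> Types Act - supp (\<mu> j)) \<longrightarrow>
      (\<exists>ebar. 0 < ebar \<and> ebar < 1 \<and>
        (\<forall>eps. (\<forall>j\<in>J. 0 < eps j \<and> eps j < ebar) \<longrightarrow>
          (\<forall>b'. B1 Act (post_entry \<mu> J tm eps) b' \<and> (\<forall>\<theta>\<in>suppP \<mu>. b' \<theta> = b \<theta>) \<longrightarrow>
             (\<exists>j\<in>J. \<forall>t\<in>supp (\<mu> j).
                 fitness Act \<pi> (post_entry \<mu> J tm eps) b' j t
               > fitness Act \<pi> (post_entry \<mu> J tm eps) b' j (tm j))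
             \<or> balanced Act \<pi> (post_entry \<mu> J tm eps) b'))))"

end

theory Submission
  imports Defs
begin

lemma prod_sum_profiles:
  assumes "\<And>i. finite (Act i)"
  shows "(\<Sum>a\<in>profiles Act. \<Prod>i\<in>(UNIV::'i::finite set). (f i (a i)::real)) = (\<Prod>i\<in>UNIV. \<Sum>y\<in>Act i. f i y)"
  using prod_sum_PiE[of UNIV Act f] assms by (simp add: profiles_def)

lemma finite_profiles:
  assumes "\<And>i. finite (Act i)"
  shows "finite (profiles (Act :: 'i::finite \<Rightarrow> 'a set))"
  unfolding profiles_def by (simp add: assms finite_PiE)

lemma mixed_sum_one:
  assumes "\<And>i. finite (Act i)" "mixed_profile Act x"
  shows "(\<Sum>a\<in>profiles Act. \<Prod>i\<in>(UNIV::'i::finite set). x i (a i)) = 1"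
  using assms by (simp add: prod_sum_profiles mixed_profile_def mixed_def)

lemma prod_upd:
  fixes x :: "'i::finite \<Rightarrow> 'a \<Rightarrow> real"
  shows "(\<Prod>k\<in>UNIV. (x(i := h)) k (a k)) = h (a i) * (\<Prod>k\<in>UNIV-{i}. x k (a k))"
proof -
  have "(\<Prod>k\<in>UNIV. (x(i := h)) k (a k)) = (x(i := h)) i (a i) * (\<Prod>k\<in>UNIV-{i}. (x(i := h)) k (a k))"
    using prod.remove[of UNIV i "\<lambda>k. (x(i:=h)) k (a k)"] by simp
  also have "(\<Prod>k\<in>UNIV-{i}. (x(i := h)) k (a k)) = (\<Prod>k\<in>UNIV-{i}. x k (a k))"
    by (rule prod.cong) auto
  finally show ?thesis by simp
qed

lemma marginal:
  assumes fin: "\<And>i. finite (Act i)" and mp: "mixed_profile Act x"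
  shows "(\<Sum>a\<in>profiles Act. (\<Prod>k\<in>(UNIV::'i::finite set). x k (a k)) * f (a i)) = (\<Sum>y\<in>Act i. x i y * f y)"
proof -
  define h where "h = (\<lambda>y. x i y * f y)"
  have "\<And>a. (\<Prod>k\<in>UNIV. x k (a k)) * f (a i) = (\<Prod>k\<in>UNIV. (x(i := h)) k (a k))"
    using prod_upd[of x i "x i" ] prod_upd[of x i h] by (simp add: h_def)
  hence "(\<Sum>a\<in>profiles Act. (\<Prod>k\<in>UNIV. x k (a k)) * f (a i)) = (\<Prod>k\<in>UNIV. \<Sum>y\<in>Act k. (x(i := h)) k y)"
    using prod_sum_profiles[OF fin, of "x(i:=h)"] by simp
  also have "\<dots> = (\<Sum>y\<in>Act i. h y) * (\<Prod>k\<in>UNIV-{i}. \<Sum>y\<in>Act k. (x(i := h)) k y)"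
    using prod.remove[of UNIV i "\<lambda>k. \<Sum>y\<in>Act k. (x(i := h)) k y"] by simp
  also have "(\<Prod>k\<in>UNIV-{i}. \<Sum>y\<in>Act k. (x(i := h)) k y) = (\<Prod>k\<in>UNIV-{i}. \<Sum>y\<in>Act k. x k y)"
    by (rule prod.cong) auto
  also have "(\<Prod>k\<in>UNIV-{i}. \<Sum>y\<in>Act k. x k y) = 1"
    using mp by (simp add: mixed_profile_def mixed_def)
  finally show ?thesis by (simp add: h_def)
qed

lemma EU_pure:
  assumes "a \<in> profiles Act" "\<And>i. finite (Act i)"
  shows "EU Act u (pure a) = u a"
proof -
  have pa: "\<And>a'. (\<Prod>i\<in>UNIV. pure a i (a' i)) = (if a' = a then 1 else 0)"
  proof -
    fix a'
    show "(\<Prod>i\<in>UNIV. pure a i (a' i)) = (if a' = a then 1 else 0)"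
    proof (cases "a' = a")
      case True thus ?thesis by (simp add: pure_def)
    next
      case False
      then obtain i where "a' i \<noteq> a i" by auto
      hence "pure a i (a' i) = 0" by (simp add: pure_def)
      thus ?thesis using False by (metis (no_types) finite UNIV_I prod_zero)
    qed
  qed
  have "EU Act u (pure a) = (\<Sum>a'\<in>profiles Act. if a' = a then u a else 0)"
    unfolding EU_def by (rule sum.cong) (auto simp: pa)
  thus ?thesis using assms finite_profiles[of Act] by simp
qed

definition thT :: "('i \<Rightarrow> 'a set) \<Rightarrow> ('i \<Rightarrow> 'a) \<Rightarrow> 'i \<Rightarrow> ('i,'a) ptype" where
  "thT Act astar i = (\<lambda>a. if a \<in> profiles Act \<and> a i = astar i then 1 else 0)"

lemma thT_Types: "thT Act astar i \<in> Types Act"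
  by (simp add: thT_def Types_def)

lemma pure_mixed:
  assumes "a \<in> profiles Act" "finite (Act i)"
  shows "mixed Act i (pure a i)"
proof -
  have ai: "a i \<in> Act i" using assms(1) by (auto simp: profiles_def)
  have "sum (\<lambda>y. if y = a i then 1 else 0) (Act i) = (1::real)"
    using assms(2) ai by (simp add: sum.delta')
  thus ?thesis using ai by (auto simp: mixed_def pure_def)
qed

lemma pure_mixed_profile:
  assumes "a \<in> profiles Act" "\<And>i. finite (Act i)"
  shows "mixed_profile Act (pure a)"
  unfolding mixed_profile_def using pure_mixed[OF assms(1) assms(2)] by blast

lemma mixed_le1:
  assumes "mixed Act i s" "finite (Act i)"
  shows "s y \<le> 1"
proof (cases "y \<in> Act i")
  case True
  have "s y \<le> sum s (Act i)" using assms True by (intro member_le_sum) (auto simp: mixed_def)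
  thus ?thesis using assms by (simp add: mixed_def)
qed (use assms in \<open>auto simp: mixed_def\<close>)

lemma EU_thT:
  assumes fin: "\<And>i. finite (Act i)" and mp: "mixed_profile Act x" and ai: "astar i \<in> Act i"
  shows "EU Act (thT Act astar i) x = x i (astar i)"
proof -
  have "EU Act (thT Act astar i) x = (\<Sum>a\<in>profiles Act. (\<Prod>k\<in>UNIV. x k (a k)) * (\<lambda>y. if y = astar i then 1 else 0) (a i))"
    unfolding EU_def by (rule sum.cong) (auto simp: thT_def)
  also have "\<dots> = (\<Sum>y\<in>Act i. x i y * (if y = astar i then 1 else 0))"
    by (rule marginal[OF fin mp])
  also have "\<dots> = x i (astar i)"
    using fin ai by (simp add: if_distrib sum.delta' cong: if_cong)
  finally show ?thesis .
qed

lemma NE_thT: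
  assumes fin: "\<And>i. finite (Act i)" and ne: "is_NE Act \<theta> x" and th: "\<theta> i = thT Act astar i"
    and as: "astar \<in> profiles Act"
  shows "x i = pure astar i"
proof -
  have ai: "astar i \<in> Act i" using as by (auto simp: profiles_def)
  have mp: "mixed_profile Act x" using ne by (simp add: is_NE_def)
  have mpu: "mixed_profile Act (x(i := pure astar i))"
    using mp pure_mixed[OF as fin] by (auto simp: mixed_profile_def)
  have "EU Act (\<theta> i) (x(i := pure astar i)) \<le> EU Act (\<theta> i) x"
    using ne pure_mixed[OF as fin] by (simp add: is_NE_def)
  hence "1 \<le> x i (astar i)"
    using EU_thT[where astar=astar and i=i, OF fin mp ai] EU_thT[where astar=astar and i=i, OF fin mpu ai] th by (simp add: pure_def)
  hence x1: "x i (astar i) = 1" using mixed_le1[of Act i "x i" "astar i"] mp fin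
    by (force simp: mixed_profile_def)
  have mi: "mixed Act i (x i)" using mp by (simp add: mixed_profile_def)
  show ?thesis
  proof
    fix y
    show "x i y = pure astar i y"
    proof (cases "y = astar i")
      case True thus ?thesis using x1 by (simp add: pure_def)
    next
      case False
      show ?thesis
      proof (cases "y \<in> Act i")
        case False thus ?thesis using mi \<open>y \<noteq> astar i\<close> by (simp add: mixed_def pure_def)
      next
        case True
        have "x i (astar i) + x i y = sum (x i) {astar i, y}" using \<open>y \<noteq> astar i\<close> by simp
        also have "\<dots> \<le> sum (x i) (Act i)"
          using mi True ai fin by (intro sum_mono2) (auto simp: mixed_def)
        finally have "x i y \<le> 0" using mi x1 by (simp add: mixed_def)
        thus ?thesis using mi \<open>y \<noteq> astar i\<close> by (auto simp: mixed_def pure_def intro: antisym)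
      qed
    qed
  qed
qed

lemma NE_pure_thT:
  assumes fin: "\<And>i. finite (Act i)" and as: "astar \<in> profiles Act"
  shows "is_NE Act (thT Act astar) (pure astar)"
  unfolding is_NE_def
proof (intro conjI allI impI)
  show mp: "mixed_profile Act (pure astar)" by (rule pure_mixed_profile[OF as fin])
  fix i s assume s: "mixed Act i s"
  have ai: "astar i \<in> Act i" using as by (auto simp: profiles_def)
  have mpu: "mixed_profile Act ((pure astar)(i := s))" using mp s by (auto simp: mixed_profile_def)
  show "EU Act (thT Act astar i) ((pure astar)(i := s)) \<le> EU Act (thT Act astar i) (pure astar)"
    using EU_thT[where astar=astar and i=i, OF fin mpu ai] EU_thT[where astar=astar and i=i, OF fin mp ai] mixed_le1[OF s fin] by (simp add: pure_def)
qed

definition dd :: "('i::finite \<Rightarrow> 'a set) \<Rightarrow> ('i \<Rightarrow> 'a) \<Rightarrow> ('i \<Rightarrow> 'a \<Rightarrow> real) \<Rightarrow> real" where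
  "dd Act astar x = (\<Sum>a\<in>profiles Act. (\<Prod>k\<in>UNIV. x k (a k)) * (if a = astar then 0 else 1))"

lemma P_nonneg: "mixed_profile Act x \<Longrightarrow> 0 \<le> (\<Prod>k\<in>UNIV. x k (a k))"
  by (intro prod_nonneg) (auto simp: mixed_profile_def mixed_def)

lemma dd_nonneg: "mixed_profile Act x \<Longrightarrow> 0 \<le> dd Act astar x"
  unfolding dd_def by (intro sum_nonneg) (simp add: P_nonneg)

lemma EU_diff:
  assumes fin: "\<And>i. finite (Act i)" and mp: "mixed_profile Act x"
  shows "u astar - EU Act u x = (\<Sum>a\<in>profiles Act. (\<Prod>k\<in>UNIV. x k (a k)) * (u astar - u a))"
proof -
  have e: "(\<Sum>a\<in>profiles Act. (\<Prod>k\<in>UNIV. x k (a k)) * u astar) = u astar"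
    using mixed_sum_one[OF fin mp] by (simp add: sum_distrib_right[symmetric])
  show ?thesis by (simp add: EU_def sum_subtractf right_diff_distrib e)
qed

lemma h_bound:
  assumes fin: "\<And>i. finite (Act i)" and mp: "mixed_profile Act x"
    and Mc: "\<And>a. a \<in> profiles Act \<Longrightarrow> u astar - u a \<le> Mc"
  shows "u astar - EU Act u x \<le> Mc * dd Act astar x"
proof -
  have "u astar - EU Act u x = (\<Sum>a\<in>profiles Act. (\<Prod>k\<in>UNIV. x k (a k)) * (u astar - u a))"
    by (rule EU_diff[OF fin mp])
  also have "\<dots> \<le> (\<Sum>a\<in>profiles Act. Mc * ((\<Prod>k\<in>UNIV. x k (a k)) * (if a = astar then 0 else 1)))"
  proof (rule sum_mono)
    fix a assume a: "a \<in> profiles Act"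
    show "(\<Prod>k\<in>UNIV. x k (a k)) * (u astar - u a) \<le> Mc * ((\<Prod>k\<in>UNIV. x k (a k)) * (if a = astar then 0 else 1))"
      using mult_right_mono[OF Mc[OF a] P_nonneg[OF mp, of a]] by (auto simp: mult.commute)
  qed
  also have "\<dots> = Mc * dd Act astar x" by (simp add: dd_def sum_distrib_left)
  finally show ?thesis .
qed

lemma g_bound:
  assumes fin: "\<And>i. finite (Act i)" and mp: "mixed_profile Act x"
    and xL: "\<And>k. k \<notin> L \<Longrightarrow> x k = pure astar k"
    and cpos: "\<And>a. a \<in> profiles Act \<Longrightarrow> a \<noteq> astar \<Longrightarrow> (\<forall>k. k \<notin> L \<longrightarrow> a k = astar k)
        \<Longrightarrow> c \<le> (\<Sum>i\<in>L. \<pi> i astar - \<pi> i a)"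
  shows "c * dd Act astar x \<le> (\<Sum>i\<in>L. \<pi> i astar - EU Act (\<pi> i) x)"
proof -
  have "c * dd Act astar x = (\<Sum>a\<in>profiles Act. (\<Prod>k\<in>UNIV. x k (a k)) * (c * (if a = astar then 0 else 1)))"
    by (simp add: dd_def sum_distrib_left mult_ac)
  also have "\<dots> \<le> (\<Sum>a\<in>profiles Act. (\<Prod>k\<in>UNIV. x k (a k)) * (\<Sum>i\<in>L. \<pi> i astar - \<pi> i a))"
  proof (rule sum_mono)
    fix a assume a: "a \<in> profiles Act"
    show "(\<Prod>k\<in>UNIV. x k (a k)) * (c * (if a = astar then 0 else 1)) \<le> (\<Prod>k\<in>UNIV. x k (a k)) * (\<Sum>i\<in>L. \<pi> i astar - \<pi> i a)"
    proof (cases "a = astar \<or> (\<Prod>k\<in>UNIV. x k (a k)) = 0")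
      case True
      show ?thesis
      proof (cases "a = astar")
        case True thus ?thesis by simp
      next
        case False
        with \<open>a = astar \<or> (\<Prod>k\<in>UNIV. x k (a k)) = 0\<close> have z: "(\<Prod>k\<in>UNIV. x k (a k)) = 0" by blast
        show ?thesis by (simp only: z)
      qed
    next
      case False
      hence nz: "\<And>k. x k (a k) \<noteq> 0" by auto
      have "\<forall>k. k \<notin> L \<longrightarrow> a k = astar k"
      proof (intro allI impI)
        fix k assume "k \<notin> L"
        thus "a k = astar k" using nz[of k] xL[of k] by (auto simp: pure_def split: if_splits)
      qed
      hence "c \<le> (\<Sum>i\<in>L. \<pi> i astar - \<pi> i a)" using cpos a False by blast
      thus ?thesis using False P_nonneg[OF mp, of a] by (simp add: mult_left_mono)
    qed
  qed
  also have "\<dots> = (\<Sum>i\<in>L. \<Sum>a\<in>profiles Act. (\<Prod>k\<in>UNIV. x k (a k)) * (\<pi> i astar - \<pi> i a))"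
    by (simp add: sum_distrib_left sum.swap[of _ L])
  also have "\<dots> = (\<Sum>i\<in>L. \<pi> i astar - EU Act (\<pi> i) x)"
    by (simp add: EU_diff[OF fin mp])
  finally show ?thesis .
qed

definition qw :: "'i set \<Rightarrow> ('i \<Rightarrow> real) \<Rightarrow> 'i set \<Rightarrow> real" where
  "qw J e L = (\<Prod>j\<in>J. if j \<in> L then e j else 1 - e j)"

lemma qw_remove:
  assumes "finite J" "i \<in> J"
  shows "qw J e L = (if i \<in> L then e i else 1 - e i) * qw (J - {i}) e L"
  unfolding qw_def using prod.remove[OF assms, of "\<lambda>j. if j \<in> L then e j else 1 - e j"] by simp

lemma qw_insert_other:
  assumes "i \<notin> J'"
  shows "qw J' e (insert i K) = qw J' e K"
  unfolding qw_def using assms by (intro prod.cong) auto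

lemma qw_nonneg:
  assumes "\<And>j. j \<in> J \<Longrightarrow> 0 \<le> e j \<and> e j \<le> 1"
  shows "0 \<le> qw J e L"
  unfolding qw_def using assms by (intro prod_nonneg) auto

lemma reindex_insert:
  assumes "finite J" "i \<in> J"
  shows "(\<Sum>K\<in>Pow (J - {i}). F (insert i K)) = (\<Sum>L\<in>{L\<in>Pow J. i \<in> L}. F L)"
proof -
  have inj: "inj_on (insert i) (Pow (J - {i}))"
    by (rule inj_onI) (metis Diff_insert_absorb PowD subset_Diff_insert)
  have img: "insert i ` Pow (J - {i}) = {L\<in>Pow J. i \<in> L}"
  proof
    show "insert i ` Pow (J - {i}) \<subseteq> {L \<in> Pow J. i \<in> L}" using assms by auto
    show "{L \<in> Pow J. i \<in> L} \<subseteq> insert i ` Pow (J - {i})"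
    proof
      fix L assume "L \<in> {L \<in> Pow J. i \<in> L}"
      hence "L = insert i (L - {i})" "L - {i} \<in> Pow (J - {i})" by auto
      thus "L \<in> insert i ` Pow (J - {i})" by blast
    qed
  qed
  show ?thesis using sum.reindex[OF inj, of F] img by simp
qed

lemma core_ineq:
  fixes J :: "'i set" and e :: "'i \<Rightarrow> real" and h :: "'i \<Rightarrow> 'i set \<Rightarrow> real"
  assumes finJ: "finite J"
    and e: "\<And>j. j \<in> J \<Longrightarrow> 0 < e j \<and> e j < ebar"
    and ebar: "ebar \<le> 1/2"
    and dnn: "\<And>K. K \<subseteq> J \<Longrightarrow> 0 \<le> d K"
    and H: "\<And>i K. i \<in> J \<Longrightarrow> K \<subseteq> J \<Longrightarrow> h i K \<le> M * d K"
    and G: "\<And>K. K \<subseteq> J \<Longrightarrow> c * d K \<le> (\<Sum>i\<in>K. h i K)"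
    and M: "0 \<le> M" and cM: "2 * real (card J) * M * ebar \<le> c"
  shows "0 \<le> (\<Sum>i\<in>J. e i * (\<Sum>K\<in>Pow (J - {i}). qw (J - {i}) e K * (h i (insert i K) - h i K)))"
proof -
  have e01: "\<And>j. j \<in> J \<Longrightarrow> 0 \<le> e j \<and> e j \<le> 1" using e ebar by force
  have qins: "e i * qw (J - {i}) e K = qw J e (insert i K)" if "i \<in> J" for i K
    using qw_remove[OF finJ that, of e "insert i K"] qw_insert_other[of i "J - {i}" e K] by simp
  have qK: "(1 - e i) * qw (J - {i}) e K = qw J e K" if "i \<in> J" "i \<notin> K" for i K
    using qw_remove[OF finJ that(1), of e K] that by simp
  have "(\<Sum>i\<in>J. e i * (\<Sum>K\<in>Pow (J - {i}). qw (J - {i}) e K * (h i (insert i K) - h i K)))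
      = (\<Sum>i\<in>J. \<Sum>K\<in>Pow (J - {i}). qw J e (insert i K) * h i (insert i K))
        - (\<Sum>i\<in>J. \<Sum>K\<in>Pow (J - {i}). qw J e (insert i K) * h i K)"
    by (simp add: sum_distrib_left sum_subtractf[symmetric] right_diff_distrib qins mult.assoc[symmetric]
        cong: sum.cong)
  also have A: "(\<Sum>i\<in>J. \<Sum>K\<in>Pow (J - {i}). qw J e (insert i K) * h i (insert i K))
      = (\<Sum>L\<in>Pow J. qw J e L * (\<Sum>i\<in>L. h i L))"
  proof -
    have "(\<Sum>i\<in>J. \<Sum>K\<in>Pow (J - {i}). qw J e (insert i K) * h i (insert i K))
        = (\<Sum>i\<in>J. \<Sum>L\<in>{L\<in>Pow J. i \<in> L}. qw J e L * h i L)"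
    proof (rule sum.cong[OF refl])
      fix i assume "i \<in> J"
      show "(\<Sum>K\<in>Pow (J - {i}). qw J e (insert i K) * h i (insert i K)) = (\<Sum>L\<in>{L\<in>Pow J. i \<in> L}. qw J e L * h i L)"
        using reindex_insert[OF finJ \<open>i \<in> J\<close>, of "\<lambda>L. qw J e L * h i L"] by simp
    qed
    also have "\<dots> = (\<Sum>L\<in>Pow J. \<Sum>i\<in>{i\<in>J. i \<in> L}. qw J e L * h i L)"
      by (rule sum.swap_restrict) (use finJ in auto)
    also have "\<dots> = (\<Sum>L\<in>Pow J. qw J e L * (\<Sum>i\<in>L. h i L))"
    proof (rule sum.cong)
      fix L assume "L \<in> Pow J"
      hence "{i\<in>J. i \<in> L} = L" by auto
      thus "(\<Sum>i\<in>{i\<in>J. i \<in> L}. qw J e L * h i L) = qw J e L * (\<Sum>i\<in>L. h i L)"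
        by (simp add: sum_distrib_left)
    qed simp
    finally show ?thesis .
  qed
  finally have eq: "(\<Sum>i\<in>J. e i * (\<Sum>K\<in>Pow (J - {i}). qw (J - {i}) e K * (h i (insert i K) - h i K)))
      = (\<Sum>L\<in>Pow J. qw J e L * (\<Sum>i\<in>L. h i L))
        - (\<Sum>i\<in>J. \<Sum>K\<in>Pow (J - {i}). qw J e (insert i K) * h i K)" .
  have Alow: "(\<Sum>L\<in>Pow J. qw J e L * (c * d L)) \<le> (\<Sum>L\<in>Pow J. qw J e L * (\<Sum>i\<in>L. h i L))"
    using G qw_nonneg[OF e01] by (intro sum_mono mult_left_mono) auto
  have Bup: "(\<Sum>i\<in>J. \<Sum>K\<in>Pow (J - {i}). qw J e (insert i K) * h i K)
      \<le> (\<Sum>i\<in>J. \<Sum>K\<in>Pow J. 2 * ebar * M * (qw J e K * d K))"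
  proof (rule sum_mono)
    fix i assume i: "i \<in> J"
    have "(\<Sum>K\<in>Pow (J - {i}). qw J e (insert i K) * h i K) \<le> (\<Sum>K\<in>Pow (J - {i}). 2 * ebar * M * (qw J e K * d K))"
    proof (rule sum_mono)
      fix K assume K: "K \<in> Pow (J - {i})"
      hence KJ: "K \<subseteq> J" and iK: "i \<notin> K" by auto
      have w0: "0 \<le> qw (J - {i}) e K" using e01 by (intro qw_nonneg) auto
      have "e i * (1 + 2 * ebar) \<le> ebar * 2"
        using e[OF i] ebar by (intro mult_mono) auto
      hence "e i \<le> 2 * ebar * (1 - e i)" by (simp add: algebra_simps)
      hence "e i * qw (J - {i}) e K \<le> 2 * ebar * (1 - e i) * qw (J - {i}) e K"
        using w0 by (rule mult_right_mono)
      hence qle: "qw J e (insert i K) \<le> 2 * ebar * qw J e K"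
        using qins[OF i, of K] qK[OF i iK] by (simp add: mult.assoc)
      have q0: "0 \<le> qw J e (insert i K)" by (rule qw_nonneg[OF e01])
      have "qw J e (insert i K) * h i K \<le> qw J e (insert i K) * (M * d K)"
        using H[OF i KJ] q0 by (rule mult_left_mono)
      also have "\<dots> \<le> 2 * ebar * qw J e K * (M * d K)"
        using qle M dnn[OF KJ] by (intro mult_right_mono) auto
      finally show "qw J e (insert i K) * h i K \<le> 2 * ebar * M * (qw J e K * d K)" by (simp add: mult_ac)
    qed
    also have "\<dots> \<le> (\<Sum>K\<in>Pow J. 2 * ebar * M * (qw J e K * d K))"
    proof (rule sum_mono2)
      show "finite (Pow J)" using finJ by simp
      show "Pow (J - {i}) \<subseteq> Pow J" by auto
      fix K assume "K \<in> Pow J - Pow (J - {i})"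
      hence "K \<subseteq> J" by auto
      thus "0 \<le> 2 * ebar * M * (qw J e K * d K)"
        using M dnn qw_nonneg[OF e01] e[OF \<open>i \<in> J\<close>] by (intro mult_nonneg_nonneg) auto
    qed
    finally show "(\<Sum>K\<in>Pow (J - {i}). qw J e (insert i K) * h i K) \<le> (\<Sum>K\<in>Pow J. 2 * ebar * M * (qw J e K * d K))" .
  qed
  define S where "S = (\<Sum>K\<in>Pow J. qw J e K * d K)"
  have S0: "0 \<le> S" unfolding S_def using dnn qw_nonneg[OF e01] by (intro sum_nonneg mult_nonneg_nonneg) auto
  have "(\<Sum>i\<in>J. \<Sum>K\<in>Pow J. 2 * ebar * M * (qw J e K * d K)) = real (card J) * (2 * ebar * M) * S"
    by (simp add: S_def sum_distrib_left mult.assoc)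
  moreover have "(\<Sum>L\<in>Pow J. qw J e L * (c * d L)) = c * S"
    by (simp add: S_def sum_distrib_left mult_ac)
  moreover have "real (card J) * (2 * ebar * M) * S \<le> c * S"
    using cM S0 by (intro mult_right_mono) (auto simp: mult_ac)
  ultimately show ?thesis using eq Alow Bup by linarith
qed

definition prof :: "'i set \<Rightarrow> ('i \<Rightarrow> 't) \<Rightarrow> ('i \<Rightarrow> 't) \<Rightarrow> 'i \<Rightarrow> 't" where
  "prof K tm th = (\<lambda>j. if j \<in> K then tm j else th j)"

lemma post_val:
  assumes "\<And>j. j \<in> J \<Longrightarrow> tm j \<noteq> th j"
  shows "post_entry (\<lambda>i t. if t = th i then 1 else 0) J tm eps j t =
    (if j \<in> J then (if t = tm j then eps j else if t = th j then 1 - eps j else 0)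
     else (if t = th j then 1 else 0))"
  using assms[of j] by (auto simp: post_entry_def)

lemma supp_post:
  assumes "\<And>j. j \<in> J \<Longrightarrow> tm j \<noteq> th j" "\<And>j. j \<in> J \<Longrightarrow> 0 < eps j \<and> eps j < 1"
  shows "supp (post_entry (\<lambda>i t. if t = th i then 1 else 0) J tm eps j) = (if j \<in> J then {th j, tm j} else {th j})"
  using assms[of j] unfolding supp_def by (auto simp: post_entry_def)

lemma fitness_reindex:
  fixes th tm :: "'i::finite \<Rightarrow> ('i, 'a) ptype"
  assumes tmth: "\<And>j. j \<in> J \<Longrightarrow> tm j \<noteq> th j"
    and eps: "\<And>j. j \<in> J \<Longrightarrow> 0 < eps j \<and> eps j < 1"
    and i: "i \<in> J" and S: "S \<subseteq> {i}" and t: "t = prof S tm th i"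
  shows "fitness Act \<pi> (post_entry (\<lambda>i t. if t = th i then 1 else 0) J tm eps) b' i t
    = (\<Sum>K\<in>Pow (J - {i}). qw (J - {i}) eps K * EU Act (\<pi> i) (b' (prof (K \<union> S) tm th)))"
proof -
  define \<mu>' where "\<mu>' = post_entry (\<lambda>i t. if t = th i then 1 else 0) J tm eps"
  define T where "T = Pi\<^sub>E UNIV (\<lambda>j. if j = i then {t} else supp (\<mu>' j))"
  have sp: "\<And>j. supp (\<mu>' j) = (if j \<in> J then {th j, tm j} else {th j})"
    unfolding \<mu>'_def by (rule supp_post[OF tmth eps])
  have bij: "bij_betw (\<lambda>K. prof (K \<union> S) tm th) (Pow (J - {i})) T"
  proof (rule bij_betw_imageI)
    show "inj_on (\<lambda>K. prof (K \<union> S) tm th) (Pow (J - {i}))"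
    proof (rule inj_onI)
      fix K1 K2 assume K1: "K1 \<in> Pow (J - {i})" and K2: "K2 \<in> Pow (J - {i})"
        and eq: "prof (K1 \<union> S) tm th = prof (K2 \<union> S) tm th"
      have "\<And>j. j \<in> K1 \<longleftrightarrow> j \<in> K2"
      proof -
        fix j
        have e: "prof (K1 \<union> S) tm th j = prof (K2 \<union> S) tm th j" using eq by simp
        show "j \<in> K1 \<longleftrightarrow> j \<in> K2"
          using e K1 K2 S tmth[of j] by (auto simp: prof_def split: if_splits)
      qed
      thus "K1 = K2" by blast
    qed
    show "(\<lambda>K. prof (K \<union> S) tm th) ` Pow (J - {i}) = T"
    proof
      show "(\<lambda>K. prof (K \<union> S) tm th) ` Pow (J - {i}) \<subseteq> T"
        using S unfolding T_def sp t by (auto simp: prof_def PiE_def extensional_def)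
      show "T \<subseteq> (\<lambda>K. prof (K \<union> S) tm th) ` Pow (J - {i})"
      proof
        fix \<theta> assume th: "\<theta> \<in> T"
        define K where "K = {j \<in> J - {i}. \<theta> j = tm j}"
        have "\<theta> = prof (K \<union> S) tm th"
        proof
          fix j
          show "\<theta> j = prof (K \<union> S) tm th j"
          proof (cases "j = i")
            case True
            have "\<theta> i \<in> (if i = i then {t} else supp (\<mu>' i))" using th unfolding T_def by (rule PiE_mem) simp
            thus ?thesis using True t S unfolding K_def by (auto simp: prof_def)
          next
            case False
            have "\<theta> j \<in> (if j = i then {t} else supp (\<mu>' j))" using th unfolding T_def by (rule PiE_mem) simp
            hence "\<theta> j \<in> supp (\<mu>' j)" using False by simp
            thus ?thesis using False S unfolding sp K_def by (auto simp: prof_def split: if_splits)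
          qed
        qed
        moreover have "K \<in> Pow (J - {i})" unfolding K_def by auto
        ultimately show "\<theta> \<in> (\<lambda>K. prof (K \<union> S) tm th) ` Pow (J - {i})" by blast
      qed
    qed
  qed
  have w: "(\<Prod>j\<in>UNIV - {i}. \<mu>' j (prof (K \<union> S) tm th j)) = qw (J - {i}) eps K"
    if K: "K \<in> Pow (J - {i})" for K
  proof -
    have "(\<Prod>j\<in>UNIV - {i}. \<mu>' j (prof (K \<union> S) tm th j))
        = (\<Prod>j\<in>UNIV - {i}. if j \<in> J then (if j \<in> K then eps j else 1 - eps j) else 1)"
      using K S tmth unfolding \<mu>'_def by (intro prod.cong) (auto simp: prof_def post_entry_def dest: tmth)
    also have "\<dots> = (\<Prod>j\<in>(UNIV - {i}) \<inter> {j. j \<in> J}. if j \<in> K then eps j else 1 - eps j)"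
      by (simp add: prod.If_cases)
    also have "(UNIV - {i}) \<inter> {j. j \<in> J} = J - {i}" by auto
    finally show ?thesis by (simp add: qw_def)
  qed
  have "fitness Act \<pi> \<mu>' b' i t = (\<Sum>\<theta>\<in>T. (\<Prod>j\<in>UNIV - {i}. \<mu>' j (\<theta> j)) * EU Act (\<pi> i) (b' \<theta>))"
    unfolding fitness_def T_def ..
  also have "\<dots> = (\<Sum>K\<in>Pow (J - {i}). (\<Prod>j\<in>UNIV - {i}. \<mu>' j (prof (K \<union> S) tm th j)) * EU Act (\<pi> i) (b' (prof (K \<union> S) tm th)))"
    using sum.reindex_bij_betw[OF bij, of "\<lambda>\<theta>. (\<Prod>j\<in>UNIV - {i}. \<mu>' j (\<theta> j)) * EU Act (\<pi> i) (b' \<theta>)"] by simp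
  also have "\<dots> = (\<Sum>K\<in>Pow (J - {i}). qw (J - {i}) eps K * EU Act (\<pi> i) (b' (prof (K \<union> S) tm th)))"
    using w by (intro sum.cong) auto
  finally show ?thesis unfolding \<mu>'_def .
qed

lemma prod_pure: "(\<Prod>i\<in>(UNIV::'i::finite set). pure a i (a' i)) = (if a' = a then 1 else 0)"
proof (cases "a' = a")
  case True thus ?thesis by (simp add: pure_def)
next
  case False
  then obtain i where "a' i \<noteq> a i" by auto
  hence "pure a i (a' i) = 0" by (simp add: pure_def)
  thus ?thesis using False by (metis (no_types) finite UNIV_I prod_zero)
qed

lemma SNE_pos:
  assumes fin: "\<And>i. finite (Act i)" and as: "astar \<in> profiles Act"
    and aSNE: "aggregate_strong_NE Act \<pi> (pure astar)"
    and a: "a \<in> profiles Act" "a \<noteq> astar" "\<forall>k. k \<notin> L \<longrightarrow> a k = astar k"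
  shows "0 < (\<Sum>i\<in>L. \<pi> i astar - \<pi> i (a::'i::finite \<Rightarrow> 'a))"
proof -
  obtain k where k: "a k \<noteq> astar k" using a(2) by auto
  hence kL: "k \<in> L" using a(3) by auto
  have m: "\<forall>j\<in>L. mixed Act j (pure a j)" using pure_mixed[OF a(1) fin] by blast
  have d: "\<exists>j\<in>L. pure a j \<noteq> pure astar j"
  proof
    show "pure a k \<noteq> pure astar k"
    proof
      assume "pure a k = pure astar k"
      hence "pure a k (a k) = pure astar k (a k)" by simp
      thus False using k by (simp add: pure_def)
    qed
  qed (rule kL)
  have eqp: "(\<lambda>i. if i \<in> L then pure a i else pure astar i) = pure a"
    using a(3) by (auto simp: pure_def fun_eq_iff)
  have "(\<Sum>j\<in>L. EU Act (\<pi> j) (pure astar)) > (\<Sum>j\<in>L. EU Act (\<pi> j) (\<lambda>i. if i \<in> L then pure a i else pure astar i))"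
    using aSNE m d unfolding aggregate_strong_NE_def by blast
  hence "(\<Sum>j\<in>L. \<pi> j astar) > (\<Sum>j\<in>L. \<pi> j a)"
    unfolding eqp EU_pure[OF as fin] EU_pure[OF a(1) fin] .
  thus ?thesis by (simp add: sum_subtractf)
qed

theorem mainTheorem5:
  fixes Act :: "'i::finite \<Rightarrow> 'a set"
    and \<pi> :: "'i \<Rightarrow> ('i \<Rightarrow> 'a) \<Rightarrow> real"
    and astar :: "'i \<Rightarrow> 'a"
  assumes fin: "\<And>i. finite (Act i)"
    and ne: "\<And>i. Act i \<noteq> {}"
    and astar_in: "astar \<in> profiles Act"
    and aSNE: "aggregate_strong_NE Act \<pi> (pure astar)"
  shows "\<exists>\<mu> b. configuration Act \<mu> b \<and> stable Act \<pi> \<mu> b \<and>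
           (\<forall>a\<in>profiles Act. outcome \<mu> b a = (if a = astar then 1 else 0))"
proof -
  define th where "th = thT Act astar"
  define \<mu> where "\<mu> = (\<lambda>i t. if t = th i then (1::real) else 0)"
  define b where "b = (\<lambda>\<theta>::'i \<Rightarrow> ('i,'a) ptype. pure astar)"
  have supp\<mu>: "\<And>i. supp (\<mu> i) = {th i}" by (auto simp: supp_def \<mu>_def)
  have suppP: "suppP \<mu> = {th}"
    unfolding suppP_def supp\<mu> by (auto simp: PiE_iff fun_eq_iff)
  have conf: "configuration Act \<mu> b"
    unfolding configuration_def pop_dist_def B1_def
  proof (intro conjI allI ballI)
    fix i
    show "type_dist Act (\<mu> i)"
      unfolding type_dist_def supp\<mu> using thT_Types[of Act astar i] by (auto simp: \<mu>_def th_def)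
  next
    fix \<theta> assume "\<theta> \<in> suppP \<mu>"
    hence "\<theta> = th" using suppP by auto
    thus "is_NE Act \<theta> (b \<theta>)" using NE_pure_thT[OF fin astar_in] by (simp add: th_def b_def)
  qed
  have outc: "\<forall>a\<in>profiles Act. outcome \<mu> b a = (if a = astar then 1 else 0)"
    unfolding outcome_def suppP by (simp add: b_def prod_pure \<mu>_def)
  define Mc where "Mc = (\<Sum>i\<in>UNIV. \<Sum>a\<in>profiles Act. \<bar>\<pi> i astar - \<pi> i a\<bar>)"
  define CS where "CS = (\<lambda>(L,a). \<Sum>i\<in>L. \<pi> i astar - \<pi> i a) `
     {(L,a). a \<in> profiles Act \<and> a \<noteq> astar \<and> (\<forall>k. k \<notin> L \<longrightarrow> a k = astar k)}"
  define c where "c = Min (insert 1 CS)"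
  have finCS: "finite CS"
  proof -
    have "{(L,a). a \<in> profiles Act \<and> a \<noteq> astar \<and> (\<forall>k. k \<notin> L \<longrightarrow> a k = astar k)} \<subseteq> UNIV \<times> profiles Act"
      by auto
    moreover have "finite (UNIV \<times> profiles Act :: ('i set \<times> ('i \<Rightarrow> 'a)) set)"
      using finite_profiles[of Act, OF fin] by simp
    ultimately show ?thesis unfolding CS_def by (meson finite_subset finite_imageI)
  qed
  have cpos: "0 < c"
    unfolding c_def using finCS
  proof (subst Min_gr_iff)
    show "\<forall>a\<in>insert 1 CS. 0 < a"
      unfolding CS_def using SNE_pos[OF fin astar_in aSNE] by auto
  qed auto
  have cle: "c \<le> (\<Sum>i\<in>L. \<pi> i astar - \<pi> i a)"
    if "a \<in> profiles Act" "a \<noteq> astar" "\<forall>k. k \<notin> L \<longrightarrow> a k = astar k" for L a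
  proof -
    have "(\<Sum>i\<in>L. \<pi> i astar - \<pi> i a) \<in> CS" unfolding CS_def using that by force
    thus ?thesis unfolding c_def using finCS by simp
  qed
  have Mcb: "\<pi> i astar - \<pi> i a \<le> Mc" if "a \<in> profiles Act" for i a
  proof -
    have "\<pi> i astar - \<pi> i a \<le> \<bar>\<pi> i astar - \<pi> i a\<bar>" by simp
    also have "\<dots> \<le> (\<Sum>a\<in>profiles Act. \<bar>\<pi> i astar - \<pi> i a\<bar>)"
      using that finite_profiles[of Act, OF fin] by (intro member_le_sum) auto
    also have "\<dots> \<le> Mc" unfolding Mc_def
      by (rule member_le_sum[of i UNIV "\<lambda>i. \<Sum>a\<in>profiles Act. \<bar>\<pi> i astar - \<pi> i a\<bar>"])
         (auto intro: sum_nonneg)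
    finally show ?thesis .
  qed
  have Mc0: "0 \<le> Mc" unfolding Mc_def by (intro sum_nonneg) auto
  define N where "N = real (card (UNIV :: 'i set))"
  define ebar where "ebar = c / (2 * (c + 2 * N * Mc))"
  have N0: "0 \<le> N" unfolding N_def by simp
  have Dpos: "0 < c + 2 * N * Mc" using cpos N0 Mc0 by (simp add: add_pos_nonneg)
  have ebar0: "0 < ebar" unfolding ebar_def using cpos Dpos by simp
  have ebar2: "ebar \<le> 1/2" unfolding ebar_def using Dpos N0 Mc0 by (simp add: field_simps)
  have cM: "2 * real (card J) * Mc * ebar \<le> c" for J :: "'i set"
  proof -
    have "real (card J) \<le> N" unfolding N_def by (simp add: card_mono)
    hence "2 * real (card J) * Mc * ebar \<le> 2 * N * Mc * ebar"
      using Mc0 ebar0 by (intro mult_right_mono) auto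
    also have "2 * N * Mc * ebar = c * (2 * N * Mc) / (2 * (c + 2 * N * Mc))"
      unfolding ebar_def by simp
    also have "\<dots> \<le> c" using Dpos cpos N0 Mc0 by (simp add: field_simps)
    finally show ?thesis .
  qed
  have stab: "stable Act \<pi> \<mu> b"
    unfolding stable_def
  proof (intro conjI allI impI)
    show "balanced Act \<pi> \<mu> b" unfolding balanced_def supp\<mu> by simp
    fix J tm assume Jtm: "J \<noteq> {} \<and> (\<forall>j\<in>J. tm j \<in> Types Act - supp (\<mu> j))"
    hence tmth: "\<And>j. j \<in> J \<Longrightarrow> tm j \<noteq> th j" using supp\<mu> by auto
    show "\<exists>ebar>0. ebar < 1 \<and>
          (\<forall>eps. (\<forall>j\<in>J. 0 < eps j \<and> eps j < ebar) \<longrightarrow>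
            (\<forall>b'. B1 Act (post_entry \<mu> J tm eps) b' \<and> (\<forall>\<theta>\<in>suppP \<mu>. b' \<theta> = b \<theta>) \<longrightarrow>
               (\<exists>j\<in>J. \<forall>t\<in>supp (\<mu> j). fitness Act \<pi> (post_entry \<mu> J tm eps) b' j (tm j)
                                      < fitness Act \<pi> (post_entry \<mu> J tm eps) b' j t) \<or>
               balanced Act \<pi> (post_entry \<mu> J tm eps) b'))"
    proof (intro exI[of _ ebar] conjI allI impI)
      show "0 < ebar" by (rule ebar0)
      show "ebar < 1" using ebar2 by simp
      fix eps b'
      assume eps: "\<forall>j\<in>J. 0 < eps j \<and> eps j < ebar"
        and b': "B1 Act (post_entry \<mu> J tm eps) b' \<and> (\<forall>\<theta>\<in>suppP \<mu>. b' \<theta> = b \<theta>)"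
      define \<mu>' where "\<mu>' = post_entry \<mu> J tm eps"
      have eps1: "\<And>j. j \<in> J \<Longrightarrow> 0 < eps j \<and> eps j < 1" using eps ebar2 by force
      have sp': "\<And>j. supp (\<mu>' j) = (if j \<in> J then {th j, tm j} else {th j})"
        unfolding \<mu>'_def \<mu>_def by (rule supp_post[OF tmth eps1])
      have profK: "prof K tm th \<in> suppP \<mu>'" if "K \<subseteq> J" for K
        using that unfolding suppP_def sp' by (auto simp: prof_def PiE_iff)
      define X where "X K = b' (prof K tm th)" for K
      have NEK: "is_NE Act (prof K tm th) (X K)" if "K \<subseteq> J" for K
        using b' profK[OF that] unfolding B1_def X_def \<mu>'_def by blast
      have mpK: "mixed_profile Act (X K)" if "K \<subseteq> J" for K
        using NEK[OF that] by (simp add: is_NE_def)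
      have pureK: "X K k = pure astar k" if "K \<subseteq> J" "k \<notin> K" for K k
        by (rule NE_thT[OF fin NEK[OF that(1)] _ astar_in]) (use that in \<open>simp add: prof_def th_def\<close>)
      define h where "h i K = \<pi> i astar - EU Act (\<pi> i) (X K)" for i K
      define D where "D i = fitness Act \<pi> \<mu>' b' i (th i) - fitness Act \<pi> \<mu>' b' i (tm i)" for i
      have Dform: "D i = (\<Sum>K\<in>Pow (J - {i}). qw (J - {i}) eps K * (h i (insert i K) - h i K))"
        if i: "i \<in> J" for i
      proof -
        have f1: "fitness Act \<pi> \<mu>' b' i (th i) = (\<Sum>K\<in>Pow (J - {i}). qw (J - {i}) eps K * EU Act (\<pi> i) (b' (prof (K \<union> {}) tm th)))"
          unfolding \<mu>'_def \<mu>_def by (rule fitness_reindex[OF tmth eps1 i]) (auto simp: prof_def)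
        have f2: "fitness Act \<pi> \<mu>' b' i (tm i) = (\<Sum>K\<in>Pow (J - {i}). qw (J - {i}) eps K * EU Act (\<pi> i) (b' (prof (K \<union> {i}) tm th)))"
          unfolding \<mu>'_def \<mu>_def by (rule fitness_reindex[OF tmth eps1 i]) (auto simp: prof_def)
        show ?thesis unfolding D_def f1 f2 h_def X_def
          by (simp add: sum_subtractf[symmetric] right_diff_distrib)
      qed
      have core: "0 \<le> (\<Sum>i\<in>J. eps i * D i)"
      proof -
        have "0 \<le> (\<Sum>i\<in>J. eps i * (\<Sum>K\<in>Pow (J - {i}). qw (J - {i}) eps K * (h i (insert i K) - h i K)))"
        proof (rule core_ineq[where d = "\<lambda>K. dd Act astar (X K)" and M = Mc and c = c and ebar = ebar])
          show "finite J" by simp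
          show "\<And>j. j \<in> J \<Longrightarrow> 0 < eps j \<and> eps j < ebar" using eps by blast
          show "ebar \<le> 1/2" by (rule ebar2)
          show "\<And>K. K \<subseteq> J \<Longrightarrow> 0 \<le> dd Act astar (X K)" using dd_nonneg mpK by blast
          show "\<And>i K. i \<in> J \<Longrightarrow> K \<subseteq> J \<Longrightarrow> h i K \<le> Mc * dd Act astar (X K)"
            unfolding h_def using h_bound[OF fin mpK] Mcb by blast
          show "\<And>K. K \<subseteq> J \<Longrightarrow> c * dd Act astar (X K) \<le> (\<Sum>i\<in>K. h i K)"
            unfolding h_def
            by (rule g_bound[OF fin mpK]) (auto intro: pureK cle)
          show "0 \<le> Mc" by (rule Mc0)
          show "2 * real (card J) * Mc * ebar \<le> c" by (rule cM)
        qed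
        thus ?thesis using Dform by (simp cong: sum.cong)
      qed
      show "(\<exists>j\<in>J. \<forall>t\<in>supp (\<mu> j). fitness Act \<pi> (post_entry \<mu> J tm eps) b' j (tm j)
                                      < fitness Act \<pi> (post_entry \<mu> J tm eps) b' j t) \<or>
               balanced Act \<pi> (post_entry \<mu> J tm eps) b'"
      proof (cases "\<exists>j\<in>J. D j > 0")
        case True
        thus ?thesis unfolding supp\<mu> D_def \<mu>'_def by auto
      next
        case False
        hence Dle: "\<And>j. j \<in> J \<Longrightarrow> eps j * D j \<le> 0"
          using eps by (meson mult_nonneg_nonpos less_imp_le not_less)
        have s0: "(\<Sum>j\<in>J. - (eps j * D j)) = 0"
          using core Dle sum_nonpos[of J "\<lambda>j. eps j * D j"] by (simp add: sum_negf)
        have "\<forall>j\<in>J. - (eps j * D j) = 0"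
          using sum_nonneg_eq_0_iff[of J "\<lambda>j. - (eps j * D j)"] s0 Dle by simp
        hence D0: "\<And>j. j \<in> J \<Longrightarrow> D j = 0" using eps by force
        have "balanced Act \<pi> \<mu>' b'"
          unfolding balanced_def sp'
        proof (intro allI ballI)
          fix i t t' assume t: "t \<in> (if i \<in> J then {th i, tm i} else {th i})"
            and t': "t' \<in> (if i \<in> J then {th i, tm i} else {th i})"
          show "fitness Act \<pi> \<mu>' b' i t = fitness Act \<pi> \<mu>' b' i t'"
          proof (cases "i \<in> J")
            case True
            hence "fitness Act \<pi> \<mu>' b' i (th i) = fitness Act \<pi> \<mu>' b' i (tm i)"
              using D0 unfolding D_def by force
            thus ?thesis using t t' True by auto
          next
            case False thus ?thesis using t t' by auto
          qed
        qed
        thus ?thesis unfolding \<mu>'_def by blast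
      qed
    qed
  qed
  show ?thesis using conf stab outc by blast
qed

end
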